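(* Let $(X,d)$ be a metric space, let $k\in[0,1)$, let $S,T:X\to X$ be mappings, and let $\phi:[0,+\infty)\to[0,+\infty)$ be a nonnegative Lebesgue-integrable function, summable on each compact subset of $[0,+\infty)$, such that $\int_0^{\epsilon}\phi(t)\,dt>0$ for each $\epsilon>0$. Suppose that for all $x,y\in X$, \[\int_0^{d(TSx,TSy)}\phi(t)\,dt\le k\int_0^{m'(Tx,Ty)}\phi(t)\,dt,\] where $m'(Tx,Ty)=\max\{d(Tx,Ty),d(Tx,TSx),d(Ty,TSy),\tfrac{d(Tx,TSy)+d(Ty,TSx)}{2}\}$. Fix $x\in X$ and put $x_n=TS^nx$ for $n\ge 0$. Then the sequence $\{x_n\}$ is bounded.
   Context: $S^n$ denotes the $n$-fold iterate of $S$ ($S^0$ the identity). *)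

theory Defs
  imports "HOL-Analysis.Analysis"
begin

text \<open>The quantity m'(Tx,Ty) from the paper, written for points u = Tx, v = Ty
  and their images us = TSx, vs = TSy.\<close>
definition mprime :: "'a::metric_space \<Rightarrow> 'a \<Rightarrow> 'a \<Rightarrow> 'a \<Rightarrow> real" where
  "mprime u v us vs = Max {dist u v, dist u us, dist v vs, (dist u vs + dist v us) / 2}"

end

theory Submission
  imports Defs
begin

lemma mprime_le:
  "dist u v \<le> B \<Longrightarrow> dist u us \<le> B \<Longrightarrow> dist v vs \<le> B \<Longrightarrow> (dist u vs + dist v us)/2 \<le> B
   \<Longrightarrow> mprime u v us vs \<le> B"
  by (simp add: mprime_def)

lemma mprime_ge: "dist u v \<le> mprime u v us vs"
  by (simp add: mprime_def)

theorem mainTheorem3: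
  fixes S T :: "'a::metric_space \<Rightarrow> 'a" and k :: real and \<phi> :: "real \<Rightarrow> real" and x :: 'a
  assumes k: "0 \<le> k" "k < 1"
    and phi_nonneg: "\<And>t. 0 \<le> t \<Longrightarrow> 0 \<le> \<phi> t"
    and phi_int: "\<And>b. 0 \<le> b \<Longrightarrow> \<phi> absolutely_integrable_on {0..b}"
    and phi_pos: "\<And>\<epsilon>. 0 < \<epsilon> \<Longrightarrow> integral {0..\<epsilon>} \<phi> > 0"
    and contr: "\<And>y z. integral {0..dist (T (S y)) (T (S z))} \<phi>
                  \<le> k * integral {0..mprime (T y) (T z) (T (S y)) (T (S z))} \<phi>"
  shows "bounded (range (\<lambda>n. T ((S ^^ n) x)))"
proof -
  define F where "F r = integral {0..r} \<phi>" for r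
  define p where "p n = T ((S ^^ n) x)" for n
  define d where "d n = dist (p n) (p (Suc n))" for n
  have intb: "\<phi> integrable_on {0..b}" if "0 \<le> b" for b
    using phi_int[OF that] by (simp add: absolutely_integrable_on_def)
  have Fmono: "F a \<le> F b" if "0 \<le> a" "a \<le> b" for a b
  proof -
    have "F a + integral {a..b} \<phi> = F b"
      unfolding F_def using Henstock_Kurzweil_Integration.integral_combine[OF that intb] that by simp
    moreover have "integral {a..b} \<phi> \<ge> 0"
      by (rule integral_nonneg) (use intb[of b] that phi_nonneg in \<open>auto intro: integrable_on_subinterval\<close>)
    ultimately show ?thesis by linarith
  qed
  have Fpos: "F r > 0" if "r > 0" for r using phi_pos[OF that] by (simp add: F_def)
  have key: "F (dist (p (Suc i)) (p (Suc j))) \<le> k * F (mprime (p i) (p j) (p (Suc i)) (p (Suc j)))" for i j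
    using contr[of "(S ^^ i) x" "(S ^^ j) x"] by (simp add: F_def p_def)
  have kmono: "k * F a \<le> k * F b" if "0 \<le> a" "a \<le> b" for a b
    using Fmono[OF that] k by (simp add: mult_left_mono)
  have dstep: "d (Suc n) \<le> d n \<and> F (d (Suc n)) \<le> k * F (d n)" for n
  proof -
    let ?M = "mprime (p n) (p (Suc n)) (p (Suc n)) (p (Suc (Suc n)))"
    have h: "F (d (Suc n)) \<le> k * F ?M" using key[of n "Suc n"] by (simp add: d_def)
    have tri: "dist (p n) (p (Suc (Suc n))) \<le> d n + d (Suc n)"
      unfolding d_def by (rule dist_triangle)
    have M0: "0 \<le> ?M" using mprime_ge[of "p n" "p (Suc n)"] zero_le_dist order_trans by blast
    have Mle: "?M \<le> max (d n) (d (Suc n))"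
      by (rule mprime_le) (use tri in \<open>auto simp: d_def\<close>)
    have "d (Suc n) \<le> d n"
    proof (rule ccontr)
      assume a: "\<not> d (Suc n) \<le> d n"
      hence "?M \<le> d (Suc n)" using Mle by simp
      hence "F (d (Suc n)) \<le> k * F (d (Suc n))" using h kmono[OF M0] by (meson order_trans)
      moreover have "F (d (Suc n)) > 0" using a zero_le_dist[of "p n" "p (Suc n)"]
        by (intro Fpos) (unfold d_def, linarith)
      ultimately show False using k
        by (metis less_le_not_le mult_less_cancel_right2)
    qed
    moreover have "?M \<le> d n" using Mle calculation by simp
    ultimately show ?thesis using h kmono[OF M0] by (meson order_trans)
  qed
  have d0: "0 \<le> d n" for n by (simp add: d_def)
  have Fd: "F (d n) \<le> k ^ n * F (d 0)" for n
  proof (induction n)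
    case 0 then show ?case by simp
  next
    case (Suc n)
    have "F (d (Suc n)) \<le> k * F (d n)" using dstep by blast
    also have "\<dots> \<le> k * (k ^ n * F (d 0))" using Suc k by (simp add: mult_left_mono)
    finally show ?case by simp
  qed
  have dsmall: "\<exists>N. \<forall>n\<ge>N. d n < e" if e: "e > 0" for e
  proof -
    have "(\<lambda>n. k ^ n * F (d 0)) \<longlonglongrightarrow> 0 * F (d 0)"
      by (intro tendsto_intros LIMSEQ_power_zero) (use k in auto)
    then have "eventually (\<lambda>n. k ^ n * F (d 0) < F e) sequentially"
      using Fpos[OF e] by (simp add: order_tendsto_iff)
    then obtain N where N: "k ^ N * F (d 0) < F e" by (meson eventually_sequentially order_refl)
    have "d N < e"
    proof (rule ccontr)
      assume "\<not> d N < e"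
      then have "F e \<le> F (d N)" using Fmono e by simp
      then show False using Fd[of N] N by simp
    qed
    moreover have "d n \<le> d N" if "N \<le> n" for n
      using lift_Suc_antimono_le[of d, OF _ that] dstep by blast
    ultimately show ?thesis by (meson le_less_trans)
  qed
  have "continuous_on {0..3} F" unfolding F_def by (rule indefinite_integral_continuous_1) (rule intb, simp)
  then have uc: "uniformly_continuous_on {0..3} F" by (rule compact_uniformly_continuous) simp
  define e where "e = (1 - k) * F 1"
  have e: "e > 0" using Fpos[of 1] k by (simp add: e_def)
  obtain \<delta> where \<delta>: "\<delta> > 0" "\<And>a b. a \<in> {0..3} \<Longrightarrow> b \<in> {0..3} \<Longrightarrow> dist a b < \<delta> \<Longrightarrow> dist (F a) (F b) < e"
    using uc e unfolding uniformly_continuous_on_def by metis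
  define \<eta> where "\<eta> = min \<delta> 1"
  have \<eta>: "\<eta> > 0" "\<eta> \<le> \<delta>" "\<eta> \<le> 1" using \<delta> by (auto simp: \<eta>_def)
  obtain N where N: "\<And>n. n \<ge> N \<Longrightarrow> d n < \<eta> / 4" using dsmall[of "\<eta>/4"] \<eta> by auto
  have gap: "\<not> (1 \<le> dist (p (Suc i)) (p (Suc j)) \<and> dist (p (Suc i)) (p (Suc j)) \<le> 2)"
    if ij: "i \<ge> N" "j \<ge> N" for i j
  proof
    let ?D = "dist (p (Suc i)) (p (Suc j))"
    let ?M = "mprime (p i) (p j) (p (Suc i)) (p (Suc j))"
    assume D: "1 \<le> ?D \<and> ?D \<le> 2"
    have di: "d i < \<eta>/4" "d j < \<eta>/4" using N ij by auto
    have t1: "dist (p i) (p j) \<le> ?D + d i + d j"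
      using dist_triangle[of "p i" "p j" "p (Suc i)"] dist_triangle[of "p (Suc i)" "p j" "p (Suc j)"]
      by (simp add: d_def dist_commute)
    have t2: "dist (p i) (p (Suc j)) \<le> dist (p i) (p j) + d j"
      using dist_triangle[of "p i" "p (Suc j)" "p j"] by (simp add: d_def)
    have t3: "dist (p j) (p (Suc i)) \<le> dist (p i) (p j) + d i"
      using dist_triangle[of "p j" "p (Suc i)" "p i"] by (simp add: d_def dist_commute)
    have Mle: "?M \<le> ?D + 2 * (d i + d j)"
      apply (insert t1 t2 t3 d0[of i] d0[of j] zero_le_dist[of "p (Suc i)" "p (Suc j)"])
      apply (rule mprime_le)
      apply (simp_all only: d_def)
      apply (smt (verit))+
      apply (simp add: field_simps)
      apply (insert zero_le_dist[of "p i" "p (Suc i)"] zero_le_dist[of "p j" "p (Suc j)"])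
      apply linarith
      done
    have h: "F ?D \<le> k * F (?D + 2 * (d i + d j))"
      using key[of i j] kmono[OF _ Mle] mprime_ge[of "p i" "p j"] zero_le_dist[of "p i" "p j"]
      by (meson order_trans)
    have "dist (F (?D + 2 * (d i + d j))) (F ?D) < e"
      by (rule \<delta>(2)) (use D di d0[of i] d0[of j] \<eta> in \<open>auto simp: dist_real_def\<close>)
    then have "F (?D + 2 * (d i + d j)) \<le> F ?D + e" by (simp add: dist_real_def)
    then have "k * F (?D + 2 * (d i + d j)) \<le> k * (F ?D + e)" using k by (simp add: mult_left_mono)
    with h have "(1 - k) * F ?D \<le> k * e" by (simp add: algebra_simps)
    also have "\<dots> < e" using e k by simp
    finally have "(1 - k) * F ?D < (1 - k) * F 1" by (simp add: e_def)
    then have "F ?D < F 1" using k by simp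
    moreover have "F 1 \<le> F ?D" using Fmono D by simp
    ultimately show False by simp
  qed
  have ball: "dist (p (Suc N)) (p (Suc j)) < 1" if "N \<le> j" for j
    using that
  proof (induction j rule: dec_induct)
    case base then show ?case by simp
  next
    case (step n)
    have "dist (p (Suc N)) (p (Suc (Suc n))) \<le> dist (p (Suc N)) (p (Suc n)) + d (Suc n)"
      unfolding d_def by (rule dist_triangle)
    moreover have "d (Suc n) < 1" using N[of "Suc n"] step \<eta> by simp
    ultimately have "dist (p (Suc N)) (p (Suc (Suc n))) < 2" using step by simp
    then show ?case using gap[of N "Suc n"] step by simp
  qed
  have "range p \<subseteq> p ` {..N} \<union> cball (p (Suc N)) 1"
  proof
    fix y assume "y \<in> range p"
    then obtain n where y: "y = p n" by auto
    show "y \<in> p ` {..N} \<union> cball (p (Suc N)) 1"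
    proof (cases "n \<le> N")
      case True then show ?thesis using y by auto
    next
      case False
      then obtain j where "n = Suc j" "N \<le> j" by (metis Suc_le_D not_less_eq_eq)
      then show ?thesis using ball[of j] y by (simp add: less_imp_le)
    qed
  qed
  then have "bounded (range p)"
    by (rule bounded_subset[rotated]) (simp add: bounded_Un finite_imp_bounded)
  then show ?thesis by (simp add: p_def)
qed

end
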